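(* Let $\mathscr{H}_2$ be the class of graphs $G$ on at least twelve vertices with $\gamma(G)=2$ and $\operatorname{diam}(\overline{G})=2$. Then $\mathscr{H}_2$ is recognizable: every graph $H$ with $\mathscr{D}(H)=\mathscr{D}(G)$ for some $G\in\mathscr{H}_2$ belongs to $\mathscr{H}_2$.
   Context: All graphs are finite, simple and undirected; $\overline{G}$ is the complement, $\operatorname{diam}$ the diameter and $\gamma$ the domination number. For a vertex $v$, the card $G-v$ is the unlabeled graph obtained by deleting $v$; the deck $\mathscr{D}(G)$ is the multiset of all cards up to isomorphism. A class of graphs is recognizable if every reconstruction (graph with the same deck) of a member of the class is again a member. *)

theory Defs
  imports Main "HOL-Library.Extended_Nat"
begin

type_synonym 'a graph = "'a set \<times> 'a set set"

definition verts :: "'a graph \<Rightarrow> 'a set" where "verts G = fst G"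
definition edges :: "'a graph \<Rightarrow> 'a set set" where "edges G = snd G"

definition wf_graph :: "'a graph \<Rightarrow> bool" where
  "wf_graph G \<longleftrightarrow> finite (verts G) \<and>
     (\<forall>e\<in>edges G. \<exists>u v. u \<noteq> v \<and> u \<in> verts G \<and> v \<in> verts G \<and> e = {u, v})"

definition adj :: "'a graph \<Rightarrow> 'a \<Rightarrow> 'a \<Rightarrow> bool" where
  "adj G u v \<longleftrightarrow> {u, v} \<in> edges G"

definition compl_graph :: "'a graph \<Rightarrow> 'a graph" where
  "compl_graph G = (verts G,
     {{u, v} | u v. u \<in> verts G \<and> v \<in> verts G \<and> u \<noteq> v \<and> {u, v} \<notin> edges G})"

definition delete_vertex :: "'a graph \<Rightarrow> 'a \<Rightarrow> 'a graph" where
  "delete_vertex G v = (verts G - {v}, {e \<in> edges G. v \<notin> e})"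

definition graph_iso :: "'a graph \<Rightarrow> 'b graph \<Rightarrow> bool" where
  "graph_iso G H \<longleftrightarrow> (\<exists>f. bij_betw f (verts G) (verts H) \<and>
     (\<forall>u\<in>verts G. \<forall>v\<in>verts G. adj G u v \<longleftrightarrow> adj H (f u) (f v)))"

text \<open>Equal decks: a bijection of vertices matching cards up to isomorphism
  (equivalently, the multisets of isomorphism classes of cards coincide).\<close>
definition same_deck :: "'a graph \<Rightarrow> 'b graph \<Rightarrow> bool" where
  "same_deck G H \<longleftrightarrow> (\<exists>\<sigma>. bij_betw \<sigma> (verts G) (verts H) \<and>
     (\<forall>v\<in>verts G. graph_iso (delete_vertex G v) (delete_vertex H (\<sigma> v))))"

definition dominating :: "'a graph \<Rightarrow> 'a set \<Rightarrow> bool" where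
  "dominating G D \<longleftrightarrow> D \<subseteq> verts G \<and>
     (\<forall>v\<in>verts G - D. \<exists>u\<in>D. adj G u v)"

definition domination_number :: "'a graph \<Rightarrow> nat" where
  "domination_number G = Min {card D | D. dominating G D}"

definition walk :: "'a graph \<Rightarrow> 'a list \<Rightarrow> bool" where
  "walk G xs \<longleftrightarrow> xs \<noteq> [] \<and> set xs \<subseteq> verts G \<and>
     (\<forall>i. Suc i < length xs \<longrightarrow> adj G (xs ! i) (xs ! Suc i))"

definition has_walk_len :: "'a graph \<Rightarrow> 'a \<Rightarrow> 'a \<Rightarrow> nat \<Rightarrow> bool" where
  "has_walk_len G u v n \<longleftrightarrow>
     (\<exists>xs. walk G xs \<and> hd xs = u \<and> last xs = v \<and> length xs = Suc n)"

definition dist :: "'a graph \<Rightarrow> 'a \<Rightarrow> 'a \<Rightarrow> enat" where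
  "dist G u v = (if \<exists>n. has_walk_len G u v n
                 then enat (LEAST n. has_walk_len G u v n) else \<infinity>)"

definition diam :: "'a graph \<Rightarrow> enat" where
  "diam G = Sup {dist G u v | u v. u \<in> verts G \<and> v \<in> verts G}"

definition class_H2 :: "'a graph \<Rightarrow> bool" where
  "class_H2 G \<longleftrightarrow> wf_graph G \<and> card (verts G) \<ge> 12 \<and>
     domination_number G = 2 \<and> diam (compl_graph G) = 2"

end

theory Submission
  imports Defs
begin

lemma verts_del[simp]: "verts (delete_vertex G w) = verts G - {w}"
  by (simp add: delete_vertex_def verts_def)

lemma adj_del[simp]: "adj (delete_vertex G w) x y \<longleftrightarrow> adj G x y \<and> x \<noteq> w \<and> y \<noteq> w"
  by (auto simp add: delete_vertex_def edges_def adj_def)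

lemma adj_sym: "adj G x y = adj G y x"
  by (simp add: adj_def insert_commute)

lemma verts_compl[simp]: "verts (compl_graph G) = verts G"
  by (simp add: compl_graph_def verts_def)

lemma adj_compl: "adj (compl_graph G) x y \<longleftrightarrow> x \<in> verts G \<and> y \<in> verts G \<and> x \<noteq> y \<and> \<not> adj G x y"
proof
  assume "adj (compl_graph G) x y"
  then obtain u v where "{x,y} = {u,v}" "u \<in> verts G" "v \<in> verts G" "u \<noteq> v" "{u,v} \<notin> edges G"
    by (auto simp add: adj_def compl_graph_def edges_def verts_def)
  then show "x \<in> verts G \<and> y \<in> verts G \<and> x \<noteq> y \<and> \<not> adj G x y"
    by (auto simp add: adj_def doubleton_eq_iff insert_commute)
next
  assume "x \<in> verts G \<and> y \<in> verts G \<and> x \<noteq> y \<and> \<not> adj G x y"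
  then show "adj (compl_graph G) x y"
    by (auto simp add: adj_def compl_graph_def edges_def verts_def)
qed

definition undset :: "'a graph \<Rightarrow> 'a set \<Rightarrow> 'a set" where
  "undset G S = {w \<in> verts G - S. \<forall>s\<in>S. \<not> adj G s w}"

definition Pb :: "'a graph \<Rightarrow> bool \<Rightarrow> 'a set \<Rightarrow> bool" where
  "Pb G b S \<longleftrightarrow> (\<exists>x y. x \<noteq> y \<and> S = {x,y} \<and> adj G x y = b)"

definition pset :: "'a graph \<Rightarrow> bool \<Rightarrow> nat \<Rightarrow> 'a set set" where
  "pset G b k = {S. S \<subseteq> verts G \<and> Pb G b S \<and> card (undset G S) = k}"

definition cnt :: "'a graph \<Rightarrow> bool \<Rightarrow> nat \<Rightarrow> nat" where
  "cnt G b k = card (pset G b k)"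

lemma undset_del: "S \<subseteq> verts G - {w} \<Longrightarrow> undset (delete_vertex G w) S = undset G S - {w}"
  unfolding undset_def by auto

lemma Pb_del: "S \<subseteq> verts G - {w} \<Longrightarrow> Pb (delete_vertex G w) b S = Pb G b S"
  unfolding Pb_def by auto

lemma Pb_card: "Pb G b S \<Longrightarrow> card S = 2"
  unfolding Pb_def by auto

lemma inner_count:
  assumes fin: "finite (verts G)" and S: "S \<subseteq> verts G" "card S = 2"
  shows "card {w \<in> verts G. w \<notin> S \<and> card (undset G S - {w}) = k} =
    (if card (undset G S) = k then card (verts G) - 2 - k
     else if card (undset G S) = Suc k then Suc k else 0)"
proof -
  let ?U = "undset G S"
  have Usub: "?U \<subseteq> verts G - S" unfolding undset_def by auto
  have finU: "finite ?U" using fin Usub finite_subset by blast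
  have finS: "finite S" using fin S finite_subset by blast
  show ?thesis
  proof (cases "card ?U = k")
    case True
    have "{w \<in> verts G. w \<notin> S \<and> card (?U - {w}) = k} = verts G - (S \<union> ?U)"
    proof -
      have "card (?U - {w}) \<noteq> k" if w: "w \<in> ?U" for w
      proof -
        have "card ?U > 0" using w finU card_gt_0_iff by blast
        then show ?thesis using True finU w by (simp add: card_Diff_singleton)
      qed
      then show ?thesis using True by auto
    qed
    moreover have "card (verts G - (S \<union> ?U)) = card (verts G) - (2 + k)"
    proof -
      have "card (S \<union> ?U) = 2 + k" using Usub True S finS finU
        by (subst card_Un_disjoint) auto
      moreover have "S \<union> ?U \<subseteq> verts G" using Usub S by auto
      ultimately show ?thesis using fin by (metis card_Diff_subset finite_subset)
    qed
    ultimately show ?thesis using True by simp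
  next
    case False
    show ?thesis
    proof (cases "card ?U = Suc k")
      case True
      have "{w \<in> verts G. w \<notin> S \<and> card (?U - {w}) = k} = ?U"
        using True finU Usub by (auto simp add: card_Diff_singleton_if)
      then show ?thesis using True by simp
    next
      case F2: False
      have eq: "{w \<in> verts G. w \<notin> S \<and> card (?U - {w}) = k} = {}"
        using False F2 finU by (auto simp add: card_Diff_singleton_if) (metis card_gt_0_iff Suc_pred empty_iff)
      show ?thesis using False F2 by (subst eq) simp
    qed
  qed
qed


lemma count_main:
  assumes fin: "finite (verts G)"
  shows "(\<Sum>w\<in>verts G. cnt (delete_vertex G w) b k) =
     (card (verts G) - 2 - k) * cnt G b k + Suc k * cnt G b (Suc k)"
proof -
  define P where "P = {S. S \<subseteq> verts G \<and> Pb G b S}"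
  have finP: "finite P" unfolding P_def using fin by (rule rev_finite_subset[OF finite_Pow_iff[THEN iffD2]]) auto
  have 1: "cnt (delete_vertex G w) b k = (\<Sum>S\<in>P. if w \<notin> S \<and> card (undset G S - {w}) = k then 1 else 0)"
    if w: "w \<in> verts G" for w
  proof -
    have "pset (delete_vertex G w) b k = {S \<in> P. w \<notin> S \<and> card (undset G S - {w}) = k}"
      unfolding pset_def P_def
    proof (intro set_eqI iffI)
      fix S assume "S \<in> {S. S \<subseteq> verts (delete_vertex G w) \<and> Pb (delete_vertex G w) b S \<and> card (undset (delete_vertex G w) S) = k}"
      then show "S \<in> {S \<in> {S. S \<subseteq> verts G \<and> Pb G b S}. w \<notin> S \<and> card (undset G S - {w}) = k}"
        using Pb_del[of S G w b] undset_del[of S G w] by auto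
    next
      fix S assume "S \<in> {S \<in> {S. S \<subseteq> verts G \<and> Pb G b S}. w \<notin> S \<and> card (undset G S - {w}) = k}"
      then have "S \<subseteq> verts G - {w}" by auto
      then show "S \<in> {S. S \<subseteq> verts (delete_vertex G w) \<and> Pb (delete_vertex G w) b S \<and> card (undset (delete_vertex G w) S) = k}"
        using Pb_del[of S G w b] undset_del[of S G w] \<open>S \<in> _\<close> by auto
    qed
    then show ?thesis unfolding cnt_def using finP
      by (simp add: sum.If_cases Int_def)
  qed
  have "(\<Sum>w\<in>verts G. cnt (delete_vertex G w) b k) =
     (\<Sum>w\<in>verts G. \<Sum>S\<in>P. if w \<notin> S \<and> card (undset G S - {w}) = k then 1 else 0)"
    using 1 by (rule sum.cong[OF refl])
  also have "\<dots> = (\<Sum>S\<in>P. \<Sum>w\<in>verts G. if w \<notin> S \<and> card (undset G S - {w}) = k then 1 else 0)"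
    by (rule sum.swap)
  also have "\<dots> = (\<Sum>S\<in>P. card {w \<in> verts G. w \<notin> S \<and> card (undset G S - {w}) = k})"
    using fin by (simp add: sum.If_cases Int_def)
  also have "\<dots> = (\<Sum>S\<in>P. (if card (undset G S) = k then card (verts G) - 2 - k else 0)
        + (if card (undset G S) = Suc k then Suc k else 0))"
  proof (rule sum.cong[OF refl])
    fix S assume "S \<in> P"
    then have "S \<subseteq> verts G" "card S = 2" unfolding P_def using Pb_card[of G b S] by auto
    then show "card {w \<in> verts G. w \<notin> S \<and> card (undset G S - {w}) = k} =
      (if card (undset G S) = k then card (verts G) - 2 - k else 0)
        + (if card (undset G S) = Suc k then Suc k else 0)"
      using inner_count[OF fin] by simp
  qed
  also have "\<dots> = (card (verts G) - 2 - k) * card {S\<in>P. card (undset G S) = k}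
       + Suc k * card {S\<in>P. card (undset G S) = Suc k}"
    using finP by (simp add: sum.distrib sum.If_cases Int_def mult.commute)
  also have "{S\<in>P. card (undset G S) = k} = pset G b k" unfolding P_def pset_def by auto
  also have "{S\<in>P. card (undset G S) = Suc k} = pset G b (Suc k)" unfolding P_def pset_def by auto
  finally show ?thesis unfolding cnt_def .
qed


lemma cnt_iso_le:
  assumes bij: "bij_betw f (verts G1) (verts G2)"
    and ad: "\<forall>u\<in>verts G1. \<forall>v\<in>verts G1. adj G1 u v \<longleftrightarrow> adj G2 (f u) (f v)"
    and fin: "finite (verts G2)"
  shows "cnt G1 b k \<le> cnt G2 b k"
proof -
  have inj: "inj_on f (verts G1)" and im: "f ` verts G1 = verts G2"
    using bij by (auto simp: bij_betw_def)
  have und: "undset G2 (f ` S) = f ` undset G1 S" if S: "S \<subseteq> verts G1" for S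
  proof (intro set_eqI iffI)
    fix w assume w: "w \<in> undset G2 (f ` S)"
    then have "w \<in> verts G2" unfolding undset_def by auto
    then obtain x where x: "x \<in> verts G1" "w = f x" using im by blast
    have "x \<notin> S" using w x unfolding undset_def by auto
    moreover have "\<forall>s\<in>S. \<not> adj G1 s x" using w x ad S unfolding undset_def by auto
    ultimately show "w \<in> f ` undset G1 S" using x unfolding undset_def by auto
  next
    fix w assume "w \<in> f ` undset G1 S"
    then obtain x where x: "x \<in> verts G1" "w = f x" "x \<notin> S" "\<forall>s\<in>S. \<not> adj G1 s x"
      unfolding undset_def by auto
    have "f x \<notin> f ` S" using inj x S by (auto dest: inj_onD)
    moreover have "\<forall>s\<in>S. \<not> adj G2 (f s) (f x)" using x ad S by auto
    ultimately show "w \<in> undset G2 (f ` S)" using x im unfolding undset_def by auto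
  qed
  have "(\<lambda>S. f ` S) ` pset G1 b k \<subseteq> pset G2 b k"
  proof
    fix T assume "T \<in> (\<lambda>S. f ` S) ` pset G1 b k"
    then obtain S where S: "S \<in> pset G1 b k" "T = f ` S" by auto
    then have Sv: "S \<subseteq> verts G1" unfolding pset_def by auto
    from S obtain x y where xy: "x \<noteq> y" "S = {x,y}" "adj G1 x y = b" unfolding pset_def Pb_def by auto
    have "f x \<noteq> f y" using inj xy Sv by (auto dest: inj_onD)
    moreover have "adj G2 (f x) (f y) = b" using ad xy Sv by auto
    ultimately have "Pb G2 b T" unfolding Pb_def using S xy by auto
    moreover have "card (undset G2 T) = k"
    proof -
      have Us: "undset G1 S \<subseteq> verts G1" unfolding undset_def by auto
      have "card (undset G2 T) = card (f ` undset G1 S)" using S(2) und[OF Sv] by simp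
      also have "\<dots> = card (undset G1 S)" by (rule card_image[OF inj_on_subset[OF inj Us]])
      finally show ?thesis using S(1) unfolding pset_def by simp
    qed
    moreover have "T \<subseteq> verts G2" using Sv S im by auto
    ultimately show "T \<in> pset G2 b k" unfolding pset_def by auto
  qed
  moreover have "inj_on (\<lambda>S. f ` S) (pset G1 b k)"
  proof (rule inj_onI)
    fix S1 S2 assume "S1 \<in> pset G1 b k" "S2 \<in> pset G1 b k" "f ` S1 = f ` S2"
    then show "S1 = S2" using inj_on_image_eq_iff[OF inj] unfolding pset_def by blast
  qed
  moreover have "finite (pset G2 b k)" using fin unfolding pset_def
    by (rule rev_finite_subset[OF finite_Pow_iff[THEN iffD2]]) auto
  ultimately show ?thesis unfolding cnt_def by (meson card_inj_on_le)
qed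

lemma graph_iso_sym: "graph_iso G H \<Longrightarrow> graph_iso H G"
proof -
  assume "graph_iso G H"
  then obtain f where bij: "bij_betw f (verts G) (verts H)"
    and ad: "\<forall>u\<in>verts G. \<forall>v\<in>verts G. adj G u v \<longleftrightarrow> adj H (f u) (f v)"
    unfolding graph_iso_def by auto
  let ?g = "inv_into (verts G) f"
  have bg: "bij_betw ?g (verts H) (verts G)" using bij by (rule bij_betw_inv_into)
  have "\<forall>u\<in>verts H. \<forall>v\<in>verts H. adj H u v \<longleftrightarrow> adj G (?g u) (?g v)"
  proof (intro ballI)
    fix u v assume "u \<in> verts H" "v \<in> verts H"
    then have "?g u \<in> verts G" "?g v \<in> verts G" "f (?g u) = u" "f (?g v) = v"
      using bij bg by (auto simp: bij_betw_def f_inv_into_f inv_into_into)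
    then show "adj H u v \<longleftrightarrow> adj G (?g u) (?g v)" using ad by metis
  qed
  then show "graph_iso H G" unfolding graph_iso_def using bg by auto
qed

lemma cnt_iso:
  assumes "graph_iso G1 G2" "finite (verts G1)" "finite (verts G2)"
  shows "cnt G1 b k = cnt G2 b k"
proof -
  have "cnt G1 b k \<le> cnt G2 b k" using assms cnt_iso_le unfolding graph_iso_def by blast
  moreover have "cnt G2 b k \<le> cnt G1 b k" using graph_iso_sym[OF assms(1)] assms cnt_iso_le unfolding graph_iso_def by blast
  ultimately show ?thesis by simp
qed

lemma alg:
  fixes a b :: "nat \<Rightarrow> nat" and n :: nat
  assumes n: "n \<ge> 12"
    and e0: "(n-2)*a 0 + a 1 = (n-2)*b 0 + b 1"
    and e1: "(n-3)*a 1 + 2*a 2 = (n-3)*b 1 + 2*b 2"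
    and e2: "(n-4)*a 2 + 3*a 3 = (n-4)*b 2 + 3*b 3"
    and a0: "a 0 = 0" and bnd: "a 3 \<le> n choose 2"
  shows "b 0 = 0"
proof (rule ccontr)
  assume "b 0 \<noteq> 0"
  then have b0: "int (b 0) \<ge> 1" by simp
  obtain m where m: "n = m + 12" using n by (metis add.commute le_iff_add)
  have bn: "int (a 3) * 2 \<le> (int m + 12) * (int m + 11)"
  proof -
    have "a 3 * 2 \<le> n * (n - 1)" using bnd by (simp add: choose_two)
    then have "int (a 3 * 2) \<le> int (n * (n - 1))" by linarith
    then show ?thesis unfolding m by (simp add: add.commute)
  qed
  have E0: "(int m + 10) * int (a 0) + int (a 1) = (int m + 10) * int (b 0) + int (b 1)"
    using arg_cong[OF e0, of int] unfolding m by (simp add: add.commute)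
  have E1: "(int m + 9) * int (a 1) + 2 * int (a 2) = (int m + 9) * int (b 1) + 2 * int (b 2)"
    using arg_cong[OF e1, of int] unfolding m by (simp add: add.commute)
  have E2: "(int m + 8) * int (a 2) + 3 * int (a 3) = (int m + 8) * int (b 2) + 3 * int (b 3)"
    using arg_cong[OF e2, of int] unfolding m by (simp add: add.commute)
  define M where "M = int m"
  have M0: "M \<ge> 0" unfolding M_def by simp
  define x0 where "x0 = int (b 0)"
  have h1: "int (a 1) = (M + 10) * x0 + int (b 1)" using E0 a0 unfolding M_def x0_def by simp
  have h2: "2 * int (a 2) = 2 * int (b 2) - (M + 9) * ((M + 10) * x0)"
  proof -
    have "(M + 9) * ((M + 10) * x0 + int (b 1)) + 2 * int (a 2) = (M + 9) * int (b 1) + 2 * int (b 2)"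
      using E1 h1 unfolding M_def by simp
    then show ?thesis by (simp add: distrib_left)
  qed
  have h3: "6 * int (a 3) = 6 * int (b 3) + (M + 8) * ((M + 9) * ((M + 10) * x0))"
  proof -
    have "(M + 8) * (2 * int (a 2)) + 6 * int (a 3) = (M + 8) * (2 * int (b 2)) + 6 * int (b 3)"
      using E2 unfolding M_def by (simp add: algebra_simps)
    then show ?thesis unfolding h2 by (simp add: right_diff_distrib)
  qed
  have P: "(M + 8) * ((M + 9) * (M + 10)) \<le> (M + 8) * ((M + 9) * ((M + 10) * x0))"
    using b0 M0 unfolding x0_def by (intro mult_left_mono) (auto intro: mult_left_mono)
  have Q: "3 * ((M + 12) * (M + 11)) < (M + 8) * ((M + 9) * (M + 10))"
  proof -
    have "M * (M * M) \<ge> 0" "M * M \<ge> 0" using M0 by auto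
    moreover have "3 * ((M + 12) * (M + 11)) = 3 * (M * M) + 69 * M + 396"
      "(M + 8) * ((M + 9) * (M + 10)) = M * (M * M) + 27 * (M * M) + 242 * M + 720"
      by (simp_all add: algebra_simps)
    ultimately show ?thesis using M0 by linarith
  qed
  show False using P Q h3 bn unfolding M_def by linarith
qed


lemma hwl0: "has_walk_len G u v 0 \<longleftrightarrow> u = v \<and> u \<in> verts G"
proof
  assume "has_walk_len G u v 0"
  then obtain xs where "walk G xs" "hd xs = u" "last xs = v" "length xs = Suc 0"
    unfolding has_walk_len_def by auto
  then show "u = v \<and> u \<in> verts G" unfolding walk_def by (auto simp: length_Suc_conv)
next
  assume "u = v \<and> u \<in> verts G"
  then show "has_walk_len G u v 0" unfolding has_walk_len_def walk_def
    by (intro exI[of _ "[u]"]) auto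
qed

lemma hwl1: "has_walk_len G u v 1 \<longleftrightarrow> u \<in> verts G \<and> v \<in> verts G \<and> adj G u v"
proof
  assume "has_walk_len G u v 1"
  then obtain xs where "walk G xs" "hd xs = u" "last xs = v" "length xs = Suc (Suc 0)"
    unfolding has_walk_len_def by auto
  then show "u \<in> verts G \<and> v \<in> verts G \<and> adj G u v" unfolding walk_def
    by (auto simp: length_Suc_conv)
next
  assume "u \<in> verts G \<and> v \<in> verts G \<and> adj G u v"
  then show "has_walk_len G u v 1" unfolding has_walk_len_def walk_def
    by (intro exI[of _ "[u,v]"]) (auto simp: less_Suc_eq)
qed

lemma hwl2: "has_walk_len G u v 2 \<longleftrightarrow> (\<exists>w\<in>verts G. u \<in> verts G \<and> v \<in> verts G \<and> adj G u w \<and> adj G w v)"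
proof
  assume "has_walk_len G u v 2"
  then obtain xs where W: "walk G xs" "hd xs = u" "last xs = v" "length xs = Suc (Suc (Suc 0))"
    unfolding has_walk_len_def by (auto simp: numeral_2_eq_2)
  then obtain a b c where xs: "xs = [a,b,c]" by (auto simp: length_Suc_conv)
  have "adj G (xs!0) (xs!1)" "adj G (xs!1) (xs!2)" using W(1,4) unfolding walk_def
    by (auto simp: numeral_2_eq_2)
  then show "\<exists>w\<in>verts G. u \<in> verts G \<and> v \<in> verts G \<and> adj G u w \<and> adj G w v"
    using W xs unfolding walk_def by auto
next
  assume "\<exists>w\<in>verts G. u \<in> verts G \<and> v \<in> verts G \<and> adj G u w \<and> adj G w v"
  then obtain w where w: "w \<in> verts G" "u \<in> verts G" "v \<in> verts G" "adj G u w" "adj G w v" by auto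
  have "walk G [u,w,v]" unfolding walk_def using w by (auto simp: less_Suc_eq)
  then show "has_walk_len G u v 2" unfolding has_walk_len_def
    by (intro exI[of _ "[u,w,v]"]) (auto simp: numeral_2_eq_2)
qed

lemma dist_le: "has_walk_len G u v m \<Longrightarrow> dist G u v \<le> enat m"
  unfolding dist_def by (auto intro: Least_le)

lemma dist_le2: "dist G u v \<le> 2 \<Longrightarrow> \<exists>m\<le>2. has_walk_len G u v m"
proof -
  assume a: "dist G u v \<le> 2"
  then have ex: "\<exists>n. has_walk_len G u v n" unfolding dist_def by (auto split: if_splits)
  then have "enat (LEAST n. has_walk_len G u v n) \<le> 2" using a unfolding dist_def by simp
  then have "(LEAST n. has_walk_len G u v n) \<le> 2" by (simp add: numeral_eq_enat)
  then show ?thesis using LeastI_ex[OF ex] by blast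
qed

lemma dist_eq2: "has_walk_len G u v 2 \<Longrightarrow> \<not> has_walk_len G u v 0 \<Longrightarrow> \<not> has_walk_len G u v 1 \<Longrightarrow> dist G u v = 2"
proof -
  assume h: "has_walk_len G u v 2" "\<not> has_walk_len G u v 0" "\<not> has_walk_len G u v 1"
  have "(LEAST n. has_walk_len G u v n) = 2"
  proof (rule Least_equality[where P="\<lambda>n. has_walk_len G u v n", OF h(1)])
    fix y assume "has_walk_len G u v y"
    then show "2 \<le> y" using h by (cases "y < 2") (auto simp: less_2_cases_iff)
  qed
  then show ?thesis unfolding dist_def using h by (auto simp: numeral_eq_enat)
qed


lemma deck_sum:
  assumes "same_deck G H" "finite (verts G)" "finite (verts H)"
  shows "(\<Sum>w\<in>verts G. cnt (delete_vertex G w) b k) = (\<Sum>v\<in>verts H. cnt (delete_vertex H v) b k)"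
proof -
  obtain \<sigma> where s: "bij_betw \<sigma> (verts G) (verts H)"
    and iso: "\<forall>v\<in>verts G. graph_iso (delete_vertex G v) (delete_vertex H (\<sigma> v))"
    using assms(1) unfolding same_deck_def by auto
  have "(\<Sum>w\<in>verts G. cnt (delete_vertex G w) b k) = (\<Sum>w\<in>verts G. cnt (delete_vertex H (\<sigma> w)) b k)"
  proof (rule sum.cong[OF refl])
    fix w assume w: "w \<in> verts G"
    show "cnt (delete_vertex G w) b k = cnt (delete_vertex H (\<sigma> w)) b k"
      by (rule cnt_iso) (use iso w assms(2,3) in auto)
  qed
  also have "\<dots> = (\<Sum>v\<in>verts H. cnt (delete_vertex H v) b k)"
    using sum.reindex_bij_betw[OF s, of "\<lambda>v. cnt (delete_vertex H v) b k"] .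
  finally show ?thesis .
qed

lemma cnt_bound:
  assumes "finite (verts G)"
  shows "cnt G b k \<le> card (verts G) choose 2"
proof -
  have "pset G b k \<subseteq> {S. S \<subseteq> verts G \<and> card S = 2}"
    unfolding pset_def by (blast dest: Pb_card)
  then have "cnt G b k \<le> card {S. S \<subseteq> verts G \<and> card S = 2}" unfolding cnt_def
    using assms by (intro card_mono) (auto intro: rev_finite_subset[OF finite_Pow_iff[THEN iffD2]])
  then show ?thesis using n_subsets[OF assms] by simp
qed

lemma cnt_eqs:
  assumes "same_deck G H" "finite (verts G)" "finite (verts H)"
  shows "(card (verts G) - 2 - k) * cnt G b k + Suc k * cnt G b (Suc k) =
         (card (verts G) - 2 - k) * cnt H b k + Suc k * cnt H b (Suc k)"
proof -
  obtain \<sigma> where s: "bij_betw \<sigma> (verts G) (verts H)"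
    using assms(1) unfolding same_deck_def by auto
  have "card (verts G) = card (verts H)" using bij_betw_same_card[OF s] .
  then show ?thesis using count_main[OF assms(2)] count_main[OF assms(3)] deck_sum[OF assms] by metis
qed

lemma zero_transfer:
  assumes "same_deck G H" "finite (verts G)" "finite (verts H)" "card (verts G) \<ge> 12"
    and "cnt G b 0 = 0"
  shows "cnt H b 0 = 0"
proof -
  obtain \<sigma> where s: "bij_betw \<sigma> (verts G) (verts H)"
    using assms(1) unfolding same_deck_def by auto
  have cc: "card (verts G) = card (verts H)" using bij_betw_same_card[OF s] .
  let ?n = "card (verts G)"
  have e0: "(?n-2)*cnt G b 0 + cnt G b 1 = (?n-2)*cnt H b 0 + cnt H b 1"
    using cnt_eqs[OF assms(1-3), of 0 b] by simp
  have e1: "(?n-3)*cnt G b 1 + 2*cnt G b 2 = (?n-3)*cnt H b 1 + 2*cnt H b 2"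
    using cnt_eqs[OF assms(1-3), of 1 b] by (simp add: numeral_2_eq_2 numeral_3_eq_3)
  have e2: "(?n-4)*cnt G b 2 + 3*cnt G b 3 = (?n-4)*cnt H b 2 + 3*cnt H b 3"
    using cnt_eqs[OF assms(1-3), of 2 b] by (simp add: numeral_2_eq_2 numeral_3_eq_3 eval_nat_numeral)
  show ?thesis
    using alg[of ?n "cnt G b" "cnt H b", OF assms(4) e0 e1 e2 assms(5) cnt_bound[OF assms(2)]] .
qed


lemma pset_finite: "finite (verts G) \<Longrightarrow> finite (pset G b k)"
proof -
  assume f: "finite (verts G)"
  have "pset G b k \<subseteq> Pow (verts G)" unfolding pset_def by blast
  then show ?thesis using f finite_subset by blast
qed

lemma cnt_pos: "finite (verts G) \<Longrightarrow> S \<in> pset G b k \<Longrightarrow> cnt G b k \<noteq> 0"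
proof -
  assume f: "finite (verts G)" and S: "S \<in> pset G b k"
  have "pset G b k \<noteq> {}" using S by blast
  then show ?thesis unfolding cnt_def using pset_finite[OF f] by simp
qed

lemma undset_empty: "finite (verts G) \<Longrightarrow> card (undset G S) = 0 \<longleftrightarrow> undset G S = {}"
proof -
  assume f: "finite (verts G)"
  have "undset G S \<subseteq> verts G" unfolding undset_def by blast
  then have "finite (undset G S)" using f finite_subset by blast
  then show ?thesis by simp
qed

lemma edge_und:
  assumes "class_H2 G" "x \<in> verts G" "y \<in> verts G" "x \<noteq> y" "adj G x y"
  shows "undset G {x,y} \<noteq> {}"
proof -
  have "dist (compl_graph G) x y \<le> diam (compl_graph G)"
    unfolding diam_def using assms(2,3) by (intro Sup_upper) auto
  then have "dist (compl_graph G) x y \<le> 2" using assms(1) unfolding class_H2_def by simp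
  then have "\<exists>m\<le>2. has_walk_len (compl_graph G) x y m" by (rule dist_le2)
  then obtain m where m: "m \<le> 2" "has_walk_len (compl_graph G) x y m" by (elim exE conjE)
  have "m \<noteq> 0"
  proof
    assume "m = 0"
    then have "has_walk_len (compl_graph G) x y 0" using m(2) by simp
    then show False using assms(4) hwl0[of "compl_graph G" x y] by blast
  qed
  moreover have "m \<noteq> 1"
  proof
    assume "m = 1"
    then have "has_walk_len (compl_graph G) x y 1" using m(2) by simp
    then show False using assms(5) hwl1[of "compl_graph G" x y] adj_compl[of G x y] by blast
  qed
  ultimately have "m = 2" using m by auto
  then have "has_walk_len (compl_graph G) x y 2" using m(2) by simp
  then obtain w where w: "w \<in> verts G" "adj (compl_graph G) x w" "adj (compl_graph G) w y"
    unfolding hwl2 by auto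
  then have "w \<in> undset G {x,y}" unfolding undset_def using adj_compl[of G] adj_sym[of G] by auto
  then show ?thesis by auto
qed

lemma dom_finite: "finite (verts G) \<Longrightarrow> finite {card D | D. dominating G D}"
proof -
  assume f: "finite (verts G)"
  have "{card D | D. dominating G D} \<subseteq> {..card (verts G)}"
  proof
    fix c assume "c \<in> {card D | D. dominating G D}"
    then obtain D where D: "dominating G D" "c = card D" by blast
    have "D \<subseteq> verts G" using D(1) unfolding dominating_def by blast
    then have "card D \<le> card (verts G)" using f by (rule card_mono[rotated])
    then show "c \<in> {..card (verts G)}" using D(2) by simp
  qed
  then show ?thesis using finite_subset by blast
qed

theorem lemma10:
  fixes G :: "'a graph" and H :: "'b graph"
  assumes "class_H2 G"
    and "wf_graph H"
    and "same_deck G H"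
  shows "class_H2 H"
proof -
  have wfG: "wf_graph G" and n12: "card (verts G) \<ge> 12" and gam: "domination_number G = 2"
    using assms(1) unfolding class_H2_def by auto
  have fG: "finite (verts G)" using wfG unfolding wf_graph_def by auto
  have fH: "finite (verts H)" using assms(2) unfolding wf_graph_def by auto
  obtain \<sigma> where s: "bij_betw \<sigma> (verts G) (verts H)"
    using assms(3) unfolding same_deck_def by auto
  have cc: "card (verts H) = card (verts G)" using bij_betw_same_card[OF s] by simp
  have cG1: "cnt G True 0 = 0"
  proof -
    have "pset G True 0 = {}"
    proof (rule ccontr)
      assume "pset G True 0 \<noteq> {}"
      then obtain S where "S \<in> pset G True 0" by auto
      then obtain x y where "x \<noteq> y" "S = {x,y}" "adj G x y" "S \<subseteq> verts G" "card (undset G S) = 0"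
        unfolding pset_def Pb_def by auto
      then show False using edge_und[OF assms(1)] undset_empty[OF fG] by auto
    qed
    then show ?thesis unfolding cnt_def by simp
  qed
  have cG2: "cnt G False 0 \<noteq> 0"
  proof -
    have "verts G \<in> {D. dominating G D}" unfolding dominating_def by auto
    then have "{card D | D. dominating G D} \<noteq> {}" by auto
    then have "Min {card D | D. dominating G D} \<in> {card D | D. dominating G D}"
      by (rule Min_in[OF dom_finite[OF fG]])
    then have "2 \<in> {card D | D. dominating G D}"
      using gam unfolding domination_number_def by simp
    then obtain D where D: "dominating G D" "card D = 2" by auto
    then obtain x y where xy: "D = {x,y}" "x \<noteq> y" by (auto simp: card_2_iff)
    have Dv: "D \<subseteq> verts G" using D unfolding dominating_def by auto
    have ue: "undset G D = {}" using D(1) unfolding dominating_def undset_def by auto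
    have "\<not> adj G x y" using edge_und[OF assms(1)] Dv xy ue by auto
    then have "D \<in> pset G False 0" unfolding pset_def Pb_def using Dv xy ue by auto
    then show ?thesis using cnt_pos[OF fG] by blast
  qed
  have cH1: "cnt H True 0 = 0" using zero_transfer[OF assms(3) fG fH n12 cG1] .
  have cH2: "cnt H False 0 \<noteq> 0"
  proof
    assume "cnt H False 0 = 0"
    have sd: "same_deck H G"
    proof -
      obtain \<tau> where t: "bij_betw \<tau> (verts G) (verts H)"
        and iso: "\<forall>v\<in>verts G. graph_iso (delete_vertex G v) (delete_vertex H (\<tau> v))"
        using assms(3) unfolding same_deck_def by auto
      let ?g = "inv_into (verts G) \<tau>"
      have "bij_betw ?g (verts H) (verts G)" using t by (rule bij_betw_inv_into)
      moreover have "\<forall>v\<in>verts H. graph_iso (delete_vertex H v) (delete_vertex G (?g v))"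
      proof
        fix v assume v: "v \<in> verts H"
        then have "?g v \<in> verts G" "\<tau> (?g v) = v" using t
          by (auto simp: bij_betw_def f_inv_into_f inv_into_into)
        then have "graph_iso (delete_vertex G (?g v)) (delete_vertex H (\<tau> (?g v)))"
          using iso by blast
        then have "graph_iso (delete_vertex G (?g v)) (delete_vertex H v)"
          using \<open>\<tau> (?g v) = v\<close> by simp
        then show "graph_iso (delete_vertex H v) (delete_vertex G (?g v))"
          by (rule graph_iso_sym)
      qed
      ultimately show ?thesis unfolding same_deck_def by blast
    qed
    have "cnt G False 0 = 0"
      using zero_transfer[OF sd fH fG _ \<open>cnt H False 0 = 0\<close>] n12 cc by simp
    then show False using cG2 by simp
  qed
  have edgeH: "undset H {x,y} \<noteq> {}" if "x \<in> verts H" "y \<in> verts H" "x \<noteq> y" "adj H x y" for x y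
  proof
    assume "undset H {x,y} = {}"
    then have "{x,y} \<in> pset H True 0" unfolding pset_def Pb_def using that by auto
    then show False using cnt_pos[OF fH] cH1 by blast
  qed
  have "pset H False 0 \<noteq> {}" using cH2 unfolding cnt_def by auto
  then obtain S where "S \<in> pset H False 0" by blast
  then obtain x y where xy: "x \<noteq> y" "x \<in> verts H" "y \<in> verts H" "\<not> adj H x y" "undset H {x,y} = {}"
    unfolding pset_def Pb_def using undset_empty[OF fH] by auto
  have domxy: "dominating H {x,y}" using xy unfolding dominating_def undset_def by auto
  have nH: "card (verts H) \<ge> 12" using cc n12 by simp
  have dn: "domination_number H = 2"
    unfolding domination_number_def
  proof (rule Min_eqI[OF dom_finite[OF fH]])
    have "card {x,y} = 2" using xy by simp
    then show "2 \<in> {card D | D. dominating H D}" using domxy by (intro CollectI exI[of _ "{x,y}"]) simp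
  next
    fix c assume "c \<in> {card D | D. dominating H D}"
    then obtain D where D: "dominating H D" "c = card D" by auto
    have fD: "finite D" using D fH unfolding dominating_def using finite_subset by blast
    show "2 \<le> c"
    proof (rule ccontr)
      assume "\<not> 2 \<le> c"
      then have "c = 0 \<or> c = 1" by auto
      then show False
      proof
        assume "c = 0"
        then have "D = {}" using D fD by simp
        moreover have "verts H \<noteq> {}" using nH by auto
        ultimately show False using D unfolding dominating_def by auto
      next
        assume "c = 1"
        then obtain z where z: "D = {z}" using D by (auto simp: card_1_singleton_iff)
        then have zv: "z \<in> verts H" using D unfolding dominating_def by auto
        have "card (verts H - {z}) \<ge> 11" using nH zv fH by (simp add: card_Diff_singleton)
        then have "verts H - {z} \<noteq> {}"
        proof (intro notI)
          assume "verts H - {z} = {}"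
          with \<open>card (verts H - {z}) \<ge> 11\<close> show False by simp
        qed
        then obtain y' where y': "y' \<in> verts H" "y' \<noteq> z" by blast
        then have "adj H z y'" using D z unfolding dominating_def by auto
        then obtain w where w: "w \<in> undset H {z,y'}" using edgeH zv y' by blast
        then have "w \<in> verts H - D" "\<not> adj H z w" using z unfolding undset_def by auto
        then show False using D z unfolding dominating_def by auto
      qed
    qed
  qed
  have le2: "dist (compl_graph H) u v \<le> 2" if uv: "u \<in> verts H" "v \<in> verts H" for u v
  proof -
    consider "u = v" | "u \<noteq> v" "\<not> adj H u v" | "u \<noteq> v" "adj H u v" by blast
    then show ?thesis
    proof cases
      case 1
      then have "has_walk_len (compl_graph H) u v 0" using uv hwl0[of "compl_graph H"] by simp
      then have "dist (compl_graph H) u v \<le> enat 0" by (rule dist_le)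
      then show ?thesis by (simp add: zero_enat_def[symmetric])
    next
      case 2
      then have "has_walk_len (compl_graph H) u v 1" using uv hwl1[of "compl_graph H"] adj_compl[of H] by simp
      then have "dist (compl_graph H) u v \<le> enat 1" by (rule dist_le)
      moreover have "enat 1 \<le> 2" by (simp add: numeral_eq_enat)
      ultimately show ?thesis by (rule order_trans)
    next
      case 3
      then obtain w where "w \<in> undset H {u,v}" using edgeH uv by blast
      then have "w \<in> verts H" "adj (compl_graph H) u w" "adj (compl_graph H) w v"
        using uv adj_compl[of H] adj_sym[of H] unfolding undset_def by auto
      then have "has_walk_len (compl_graph H) u v 2" using uv hwl2[of "compl_graph H"] by auto
      then show ?thesis using dist_le[of "compl_graph H" u v 2] by (simp add: numeral_eq_enat)
    qed
  qed
  obtain c where c: "c \<in> verts H" "c \<noteq> x" "c \<noteq> y"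
  proof -
    have "card (verts H - {x,y}) \<ge> 10" using nH xy fH by (simp add: card_Diff_subset)
    then have "verts H - {x,y} \<noteq> {}"
    proof (intro notI)
      assume "verts H - {x,y} = {}"
      with \<open>card (verts H - {x,y}) \<ge> 10\<close> show False by simp
    qed
    then obtain c where "c \<in> verts H - {x,y}" by blast
    then show ?thesis using that by auto
  qed
  obtain p where p: "p \<in> verts H" "p \<noteq> c" "adj H p c"
    using domxy c xy unfolding dominating_def by auto
  have d2: "dist (compl_graph H) p c = 2"
  proof (rule dist_eq2)
    obtain w where "w \<in> undset H {p,c}" using edgeH p c by blast
    then have "w \<in> verts H" "adj (compl_graph H) p w" "adj (compl_graph H) w c"
      using p c adj_compl[of H] adj_sym[of H] unfolding undset_def by auto
    then show "has_walk_len (compl_graph H) p c 2" using p c hwl2[of "compl_graph H"] by auto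
    show "\<not> has_walk_len (compl_graph H) p c 0" using p by (simp add: hwl0)
    show "\<not> has_walk_len (compl_graph H) p c 1" using p hwl1[of "compl_graph H" p c] adj_compl[of H p c] by blast
  qed
  have "diam (compl_graph H) = 2"
    unfolding diam_def
  proof (rule antisym)
    show "Sup {dist (compl_graph H) u v | u v. u \<in> verts (compl_graph H) \<and> v \<in> verts (compl_graph H)} \<le> 2"
    proof (rule Sup_least)
      fix d assume "d \<in> {dist (compl_graph H) u v | u v. u \<in> verts (compl_graph H) \<and> v \<in> verts (compl_graph H)}"
      then obtain u v where "d = dist (compl_graph H) u v" "u \<in> verts H" "v \<in> verts H" by auto
      then show "d \<le> 2" using le2 by simp
    qed
    show "2 \<le> Sup {dist (compl_graph H) u v | u v. u \<in> verts (compl_graph H) \<and> v \<in> verts (compl_graph H)}"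
    proof -
      have "dist (compl_graph H) p c \<in> {dist (compl_graph H) u v | u v. u \<in> verts (compl_graph H) \<and> v \<in> verts (compl_graph H)}"
        using p c by auto
      then have "dist (compl_graph H) p c \<le> Sup {dist (compl_graph H) u v | u v. u \<in> verts (compl_graph H) \<and> v \<in> verts (compl_graph H)}"
        by (rule Sup_upper)
      then show ?thesis using d2 by simp
    qed
  qed
  then show ?thesis unfolding class_H2_def using assms(2) nH dn by simp
qed

end
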